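(* Let $\mu>0$ and let $\mathcal P$ be the Fourier multiplier operator on $2\pi$-periodic functions given by either (i) $\mathcal P(k)=\dfrac{1}{1+\mu^2k^2/2}$, or (ii) $\mathcal P(k)=\dfrac{\tanh(\mu k)}{\mu k}$ for $k\neq0$, $\mathcal P(0)=1$. Suppose $q\in H^2([0,2\pi])$ is real-valued and $2\pi$-periodic, and that the function $\mathcal P q_x$ vanishes only on a set of (Lebesgue) measure zero. Then the operator \[ f\mapsto (\mathcal P q_x)\,\mathcal P^2\partial_x^2\big((\mathcal P q_x)\,f\big) \] acting on $L^2([0,2\pi])$ has no zero eigenvalue, i.e. there is no nonzero $f\in L^2([0,2\pi])$ with $(\mathcal P q_x)\,\mathcal P^2\partial_x^2\big((\mathcal P q_x)\,f\big)=0$.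
   Context: All functions are real-valued and $2\pi$-periodic on $[0,2\pi]$, with Fourier coefficients $\hat f_k$, $k\in\mathbb Z$. A Fourier multiplier with symbol $m(k)$ acts by $\widehat{(mf)}_k=m(k)\hat f_k$; $\partial_x$ has symbol $ik$, so $\mathcal P^2\partial_x^2$ has symbol $-k^2\mathcal P(k)^2$. The expression $\mathcal P q_x$ denotes the function obtained by applying $\mathcal P$ to $q_x=\partial_x q$, and $(\mathcal P q_x)\,g$ denotes pointwise multiplication. Choice (i) corresponds to the "regularised Boussinesq" model and choice (ii) to the "regularised Boussinesq-Whitham" model. *)

theory Defs
  imports "HOL-Analysis.Analysis"
begin

definition L2_per :: "(real \<Rightarrow> real) \<Rightarrow> bool" where
  "L2_per f \<longleftrightarrow> f \<in> borel_measurable lebesgue \<and>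
     set_integrable lebesgue {0..2*pi} (\<lambda>x. (f x)^2)"

definition fcoeff :: "(real \<Rightarrow> real) \<Rightarrow> int \<Rightarrow> complex" where
  "fcoeff f k = complex_of_real (1 / (2*pi)) *
     (LINT x:{0..2*pi}|lebesgue. complex_of_real (f x) * cis (- (real_of_int k * x)))"

definition H2_per :: "(real \<Rightarrow> real) \<Rightarrow> bool" where
  "H2_per f \<longleftrightarrow> L2_per f \<and>
     (\<lambda>k::int. (real_of_int k)^4 * (cmod (fcoeff f k))^2) summable_on UNIV"

definition is_multiplier_image :: "(int \<Rightarrow> complex) \<Rightarrow> (real \<Rightarrow> real) \<Rightarrow> (real \<Rightarrow> real) \<Rightarrow> bool" where
  "is_multiplier_image m h g \<longleftrightarrow> L2_per g \<and> (\<forall>k. fcoeff g k = m k * fcoeff h k)"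

definition P_rB :: "real \<Rightarrow> int \<Rightarrow> real" where
  "P_rB \<mu> k = 1 / (1 + \<mu>^2 * (real_of_int k)^2 / 2)"

definition P_rBW :: "real \<Rightarrow> int \<Rightarrow> real" where
  "P_rBW \<mu> k = (if k = 0 then 1 else tanh (\<mu> * real_of_int k) / (\<mu> * real_of_int k))"

end

theory Submission
  imports Defs
begin

lemma L0:
  fixes h :: "real \<Rightarrow> real"
  assumes hi: "integrable lebesgue h"
    and z: "\<And>y. (LINT x|lebesgue. indicator {y<..} x * h x) = 0"
  shows "AE x in lebesgue. h x = 0"
proof -
  have hm[measurable]: "h \<in> borel_measurable lebesgue" using hi by auto
  obtain h' where h'm[measurable]: "h' \<in> borel_measurable lborel" and ae: "AE x in lborel. h x = h' x"
    using completion_ex_borel_measurable_real[OF hm] by blast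
  have [measurable]: "(\<lambda>x::real. x) \<in> borel_measurable lebesgue" by (rule measurable_completion) simp
  have ae': "AE x in lebesgue. h x = h' x" using AE_completion[OF ae] .
  have h'm2[measurable]: "h' \<in> borel_measurable lebesgue" using h'm by (simp add: measurable_completion)
  have "integrable lebesgue h'" using integrable_cong_AE[OF hm h'm2 ae'] hi by simp
  then have hi': "integrable lborel h'" using integrable_completion[OF h'm] by simp
  have z': "(LINT x|lborel. indicator {y<..} x * h' x) = 0" for y
  proof -
    have "(LINT x|lborel. indicator {y<..} x * h' x) = (LINT x|lebesgue. indicator {y<..} x * h' x)"
      by (rule integral_completion[symmetric]) simp
    also have "\<dots> = (LINT x|lebesgue. indicator {y<..} x * h x)"
      apply (rule integral_cong_AE)
        apply measurable
      using ae' by auto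
    finally show ?thesis using z by simp
  qed
  define M where "M = density lborel (\<lambda>x. ennreal (max 0 (h' x)))"
  define N where "N = density lborel (\<lambda>x. ennreal (max 0 (- h' x)))"
  have ip: "integrable lborel (\<lambda>x. max 0 (h' x) * indicator {y<..} x)" for y
    using hi' by (intro integrable_real_mult_indicator) auto
  have im: "integrable lborel (\<lambda>x. max 0 (- h' x) * indicator {y<..} x)" for y
    using hi' by (intro integrable_real_mult_indicator) auto
  have eM: "emeasure M {y<..} = ennreal (LINT x|lborel. max 0 (h' x) * indicator {y<..} x)" for y
  proof -
    have "emeasure M {y<..} = (\<integral>\<^sup>+x. ennreal (max 0 (h' x)) * indicator {y<..} x \<partial>lborel)"
      unfolding M_def by (subst emeasure_density) auto
    also have "\<dots> = (\<integral>\<^sup>+x. ennreal (max 0 (h' x) * indicator {y<..} x) \<partial>lborel)"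
      by (intro nn_integral_cong) (auto split: split_indicator)
    also have "\<dots> = ennreal (LINT x|lborel. max 0 (h' x) * indicator {y<..} x)" by (rule nn_integral_eq_integral[OF ip]) auto
    finally show ?thesis .
  qed
  have eN: "emeasure N {y<..} = ennreal (LINT x|lborel. max 0 (- h' x) * indicator {y<..} x)" for y
  proof -
    have "emeasure N {y<..} = (\<integral>\<^sup>+x. ennreal (max 0 (- h' x)) * indicator {y<..} x \<partial>lborel)"
      unfolding N_def by (subst emeasure_density) auto
    also have "\<dots> = (\<integral>\<^sup>+x. ennreal (max 0 (- h' x) * indicator {y<..} x) \<partial>lborel)"
      by (intro nn_integral_cong) (auto split: split_indicator)
    also have "\<dots> = ennreal (LINT x|lborel. max 0 (- h' x) * indicator {y<..} x)" by (rule nn_integral_eq_integral[OF im]) auto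
    finally show ?thesis .
  qed
  have "(LINT x|lborel. max 0 (h' x) * indicator {y<..} x) - (LINT x|lborel. max 0 (- h' x) * indicator {y<..} x)
     = (LINT x|lborel. indicator {y<..} x * h' x)" for y
    by (subst Bochner_Integration.integral_diff[OF ip im, symmetric]) (auto intro!: Bochner_Integration.integral_cong split: split_indicator)
  then have eq: "emeasure M {y<..} = emeasure N {y<..}" for y using eM eN z' by simp
  have "M = N"
  proof (rule measure_eqI_lessThan)
    show "sets M = sets borel" "sets N = sets borel" by (auto simp: M_def N_def)
    show "emeasure M {x<..} < \<infinity>" for x using eM[of x] by simp
    show "emeasure M {x<..} = emeasure N {x<..}" for x by (rule eq)
  qed
  then have "AE x in lborel. ennreal (max 0 (h' x)) = ennreal (max 0 (- h' x))"
    unfolding M_def N_def by (intro sigma_finite_measure.density_unique[OF sigma_finite_lborel]) auto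
  then have "AE x in lborel. h' x = 0"
    by eventually_elim (auto simp: max_def split: if_splits)
  then have "AE x in lebesgue. h' x = 0" by (rule AE_completion)
  with ae' show ?thesis by eventually_elim simp
qed


lemma int_cont_real:
  fixes g \<phi> :: "real \<Rightarrow> real"
  assumes g: "set_integrable lebesgue {a..b} g" and c: "continuous_on {a..b} \<phi>"
  shows "set_integrable lebesgue {a..b} (\<lambda>x. g x * \<phi> x)"
proof -
  have "(\<lambda>x. \<phi> x * g x) absolutely_integrable_on {a..b}"
    apply (rule absolutely_integrable_bounded_measurable_product_real)
    using c g by (auto intro!: continuous_imp_measurable_on_sets_lebesgue compact_imp_bounded compact_continuous_image)
  then show ?thesis by (simp add: mult.commute)
qed

lemma int_cont_cplx:
  fixes g :: "real \<Rightarrow> real" and \<phi> :: "real \<Rightarrow> complex"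
  assumes g: "set_integrable lebesgue {a..b} g" and c: "continuous_on {a..b} \<phi>"
  shows "set_integrable lebesgue {a..b} (\<lambda>x. complex_of_real (g x) * \<phi> x)"
proof -
  have g': "set_integrable lebesgue {a..b} (\<lambda>x. complex_of_real (g x))"
  proof -
    have "(\<lambda>x. indicat_real {a..b} x *\<^sub>R complex_of_real (g x)) = (\<lambda>x. complex_of_real (indicat_real {a..b} x *\<^sub>R g x))"
      by (auto simp: fun_eq_iff indicator_def)
    then show ?thesis using g unfolding set_integrable_def by (simp only: complex_of_real_integrable_eq)
  qed
  have "(\<lambda>x. \<phi> x * complex_of_real (g x)) absolutely_integrable_on {a..b}"
    apply (rule absolutely_integrable_bounded_measurable_product[OF bilinear_times])
    using c g' by (auto intro!: continuous_imp_measurable_on_sets_lebesgue compact_imp_bounded compact_continuous_image)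
  then show ?thesis by (simp add: mult.commute)
qed

inductive trigp :: "(real \<Rightarrow> complex) \<Rightarrow> bool" where
  tb: "trigp (\<lambda>x. c * cis (of_int k * x))"
| ta: "trigp f \<Longrightarrow> trigp g \<Longrightarrow> trigp (\<lambda>x. f x + g x)"

lemma trigp_mult: "trigp f \<Longrightarrow> trigp g \<Longrightarrow> trigp (\<lambda>x. f x * g x)"
proof (induction f rule: trigp.induct)
  case (tb c k)
  from tb show ?case
  proof (induction g rule: trigp.induct)
    case (tb d l)
    have e: "(\<lambda>x. c * cis (of_int k * x) * (d * cis (of_int l * x))) = (\<lambda>x. (c*d) * cis (of_int (k+l) * x))"
      by (simp add: cis_mult algebra_simps)
    show ?case unfolding e by (rule trigp.tb)
  next
    case (ta f g)
    then show ?case by (simp add: distrib_left trigp.ta)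
  qed
next
  case (ta f1 f2)
  then show ?case by (simp add: distrib_right trigp.ta)
qed

lemma trigp_cont: "trigp f \<Longrightarrow> continuous_on UNIV f"
  by (induction f rule: trigp.induct) (auto intro!: continuous_intros)

lemma rpf_trigp: "real_polynomial_function p \<Longrightarrow> trigp (\<lambda>x. complex_of_real (p (cis x)))"
proof (induction p rule: real_polynomial_function.induct)
  case (linear p)
  then interpret bounded_linear p .
  have e: "cis x = of_real (cos x) *\<^sub>R 1 + sin x *\<^sub>R \<i>" for x by (simp add: complex_eq_iff)
  have "complex_of_real (p (cis x)) = (of_real (p 1)/2 + of_real (p \<i>)/(2*\<i>)) * cis (of_int 1 * x)
          + (of_real (p 1)/2 - of_real (p \<i>)/(2*\<i>)) * cis (of_int (-1) * x)" for x
    by (subst e) (simp add: add scale complex_eq_iff field_simps cis.ctr)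
  then have "(\<lambda>x. complex_of_real (p (cis x))) = (\<lambda>x. (of_real (p 1)/2 + of_real (p \<i>)/(2*\<i>)) * cis (of_int 1 * x)
          + (of_real (p 1)/2 - of_real (p \<i>)/(2*\<i>)) * cis (of_int (-1) * x))" by auto
  then show ?case by (simp only:) (intro trigp.intros)
next
  case (const c)
  have "(\<lambda>x. complex_of_real c) = (\<lambda>x. complex_of_real c * cis (of_int 0 * x))" by simp
  then show ?case by (simp only:) (rule trigp.tb)
next
  case (add f g) then show ?case by (simp add: trigp.ta)
next
  case (mult f g) then show ?case using trigp_mult by fastforce
qed

lemma trigp_int:
  fixes g :: "real \<Rightarrow> real"
  assumes g: "set_integrable lebesgue {0..2*pi} g"
    and hz: "\<And>k::int. (LINT x:{0..2*pi}|lebesgue. complex_of_real (g x) * cis (- (real_of_int k * x))) = 0"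
  shows "trigp \<phi> \<Longrightarrow> (LINT x:{0..2*pi}|lebesgue. complex_of_real (g x) * \<phi> x) = 0"
proof (induction \<phi> rule: trigp.induct)
  case (tb c k)
  have "(LINT x:{0..2*pi}|lebesgue. complex_of_real (g x) * (c * cis (of_int k * x)))
      = (LINT x:{0..2*pi}|lebesgue. c * (complex_of_real (g x) * cis (- (real_of_int (-k) * x))))"
    by (simp add: algebra_simps)
  also have "\<dots> = 0" using hz[of "-k"] by simp
  finally show ?case .
next
  case (ta f1 f2)
  have "set_integrable lebesgue {0..2*pi} (\<lambda>x. complex_of_real (g x) * f1 x)"
       "set_integrable lebesgue {0..2*pi} (\<lambda>x. complex_of_real (g x) * f2 x)"
    using ta.hyps by (auto intro!: int_cont_cplx[OF g] continuous_on_subset[OF trigp_cont])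
  then show ?case using ta.IH by (simp add: distrib_left set_integral_add)
qed


lemma cont_int:
  fixes g :: "real \<Rightarrow> real" and \<psi> :: "complex \<Rightarrow> real"
  assumes g: "set_integrable lebesgue {0..2*pi} g"
    and hz: "\<And>k::int. (LINT x:{0..2*pi}|lebesgue. complex_of_real (g x) * cis (- (real_of_int k * x))) = 0"
    and c: "continuous_on (sphere 0 1) \<psi>"
  shows "(LINT x:{0..2*pi}|lebesgue. g x * \<psi> (cis x)) = 0"
proof -
  let ?I = "{0..2*pi}"
  have cc: "continuous_on ?I (\<lambda>x. \<psi> (cis x))" if "continuous_on (sphere 0 1) \<psi>" for \<psi> :: "complex \<Rightarrow> real"
    by (rule continuous_on_compose2[OF that]) (auto intro!: continuous_intros)
  have gi: "set_integrable lebesgue ?I (\<lambda>x. g x * \<psi> (cis x))" by (rule int_cont_real[OF g cc[OF c]])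
  have ga: "set_integrable lebesgue ?I (\<lambda>x. \<bar>g x\<bar>)" by (rule set_integrable_abs[OF g])
  define C where "C = (LINT x:?I|lebesgue. \<bar>g x\<bar>)"
  have C0: "C \<ge> 0" unfolding C_def set_lebesgue_integral_def by (rule Bochner_Integration.integral_nonneg) auto
  have bound: "\<bar>LINT x:?I|lebesgue. g x * \<psi> (cis x)\<bar> \<le> e * C" if e: "e > 0" for e
  proof -
    obtain p where p: "real_polynomial_function p" and pe: "\<And>z. z \<in> sphere 0 1 \<Longrightarrow> \<bar>\<psi> z - p z\<bar> < e"
      using Stone_Weierstrass_real_polynomial_function[OF compact_sphere c e] by blast
    have pc: "continuous_on (sphere 0 1) p"
      using p continuous_on_polymonial_function real_polynomial_function_eq by blast
    have gp: "set_integrable lebesgue ?I (\<lambda>x. g x * p (cis x))" by (rule int_cont_real[OF g cc[OF pc]])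
    have "complex_of_real (LINT x:?I|lebesgue. g x * p (cis x))
        = (LINT x:?I|lebesgue. complex_of_real (g x) * complex_of_real (p (cis x)))"
      by (simp add: set_integral_complex_of_real[symmetric])
    also have "\<dots> = 0" by (rule trigp_int[OF g hz rpf_trigp[OF p]])
    finally have p0: "(LINT x:?I|lebesgue. g x * p (cis x)) = 0" by simp
    have "(LINT x:?I|lebesgue. g x * \<psi> (cis x)) = (LINT x:?I|lebesgue. g x * \<psi> (cis x)) - (LINT x:?I|lebesgue. g x * p (cis x))"
      using p0 by simp
    also have "\<dots> = (LINT x:?I|lebesgue. g x * (\<psi> (cis x) - p (cis x)))"
      using set_integral_diff(2)[OF gi gp] by (simp add: algebra_simps)
    finally have eq: "(LINT x:?I|lebesgue. g x * \<psi> (cis x)) = (LINT x:?I|lebesgue. g x * (\<psi> (cis x) - p (cis x)))" .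
    have di: "set_integrable lebesgue ?I (\<lambda>x. g x * (\<psi> (cis x) - p (cis x)))"
      using set_integral_diff(1)[OF gi gp] by (simp add: algebra_simps)
    have ge: "set_integrable lebesgue ?I (\<lambda>x. \<bar>g x\<bar> * e)" using ga by simp
    have pt: "\<bar>g x * (\<psi> (cis x) - p (cis x))\<bar> \<le> \<bar>g x\<bar> * e" for x
    proof -
      have "\<bar>\<psi> (cis x) - p (cis x)\<bar> \<le> e" using pe[of "cis x"] by simp
      then show ?thesis by (simp add: abs_mult mult_left_mono)
    qed
    have "(LINT x:?I|lebesgue. g x * (\<psi> (cis x) - p (cis x))) \<le> (LINT x:?I|lebesgue. \<bar>g x\<bar> * e)"
      by (rule set_integral_mono[OF di ge]) (use pt in \<open>auto simp: abs_le_iff\<close>)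
    moreover have "- (LINT x:?I|lebesgue. g x * (\<psi> (cis x) - p (cis x))) \<le> (LINT x:?I|lebesgue. \<bar>g x\<bar> * e)"
    proof -
      have "(LINT x:?I|lebesgue. - (g x * (\<psi> (cis x) - p (cis x)))) \<le> (LINT x:?I|lebesgue. \<bar>g x\<bar> * e)"
      proof (rule set_integral_mono)
        show "set_integrable lebesgue ?I (\<lambda>x. - (g x * (\<psi> (cis x) - p (cis x))))"
          using di unfolding set_integrable_def by simp
      qed (use ge pt in \<open>auto simp: abs_le_iff\<close>)
      then show ?thesis by (simp add: set_integral_uminus[OF di])
    qed
    moreover have "(LINT x:?I|lebesgue. \<bar>g x\<bar> * e) = e * C"
      unfolding C_def by (simp add: mult.commute)
    ultimately show ?thesis using eq by linarith
  qed
  show ?thesis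
  proof (rule ccontr)
    let ?a = "LINT x:?I|lebesgue. g x * \<psi> (cis x)"
    assume "?a \<noteq> 0"
    then have pos: "\<bar>?a\<bar> / (C + 1) > 0" using C0 by auto
    have "\<bar>?a\<bar> \<le> \<bar>?a\<bar> / (C + 1) * C" by (rule bound[OF pos])
    also have "\<dots> < \<bar>?a\<bar>" using C0 \<open>?a \<noteq> 0\<close> by (simp add: field_simps)
    finally show False by simp
  qed
qed

lemma periodic_int:
  fixes g \<phi> :: "real \<Rightarrow> real"
  assumes g: "set_integrable lebesgue {0..2*pi} g"
    and hz: "\<And>k::int. (LINT x:{0..2*pi}|lebesgue. complex_of_real (g x) * cis (- (real_of_int k * x))) = 0"
    and c: "continuous_on {0..2*pi} \<phi>" and per: "\<phi> 0 = \<phi> (2*pi)"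
  shows "(LINT x:{0..2*pi}|lebesgue. g x * \<phi> x) = 0"
proof -
  define p where "p t = \<phi> (2*pi*t)" for t
  have "path p" unfolding path_def p_def
    by (rule continuous_on_compose2[OF c]) (auto intro!: continuous_intros)
  then have "homotopic_loops UNIV p p"
    by (simp add: homotopic_loops_refl pathfinish_def pathstart_def p_def per)
  then have "homotopic_with_canon (\<lambda>h. True) (sphere 0 1) UNIV (p \<circ> (\<lambda>z. (Arg2pi z / (2 * pi)))) (p \<circ> (\<lambda>z. (Arg2pi z / (2 * pi))))"
    by (rule homotopic_loops_imp_homotopic_circlemaps)
  then have pc: "continuous_on (sphere 0 1) (p \<circ> (\<lambda>z. (Arg2pi z / (2 * pi))))"
    using homotopic_with_imp_continuous by blast
  have eq: "(p \<circ> (\<lambda>z. (Arg2pi z / (2 * pi)))) (cis x) = \<phi> x" if "x \<in> {0..2*pi}" for x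
  proof (cases "x = 2*pi")
    case True then show ?thesis using Arg2pi_of_real[of 1] by (simp add: p_def per)
  next
    case False
    then have "Arg2pi (cis x) = x" using that by (simp add: cis_conv_exp Arg2pi_exp)
    then show ?thesis by (simp add: p_def)
  qed
  have "(LINT x:{0..2*pi}|lebesgue. g x * \<phi> x) = (LINT x:{0..2*pi}|lebesgue. g x * (p \<circ> (\<lambda>z. (Arg2pi z / (2 * pi)))) (cis x))"
    by (rule set_lebesgue_integral_cong) (use eq in auto)
  also have "\<dots> = 0" by (rule cont_int[OF g hz pc])
  finally show ?thesis .
qed


lemma eventually_ge_inv:
  fixes d :: real assumes "d > 0"
  shows "eventually (\<lambda>n::nat. real n * d \<ge> 1) sequentially"
proof -
  obtain N :: nat where N: "1/d < real N" using reals_Archimedean2 by blast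
  show ?thesis unfolding eventually_sequentially
  proof (intro exI allI impI)
    fix n assume "N \<le> n"
    then have "1/d < real n" using N by linarith
    then show "real n * d \<ge> 1" using assms by (simp add: field_simps)
  qed
qed

lemma U1c:
  fixes g :: "real \<Rightarrow> real"
  assumes g: "set_integrable lebesgue {0..2*pi} g"
    and hz: "\<And>k::int. (LINT x:{0..2*pi}|lebesgue. complex_of_real (g x) * cis (- (real_of_int k * x))) = 0"
  shows "(LINT x:{0..2*pi}|lebesgue. indicator {y<..} x * g x) = 0"
proof -
  let ?I = "{0..2*pi}"
  define cl where "cl t = max 0 (min 1 t)" for t::real
  have cl01: "0 \<le> cl t" "cl t \<le> 1" for t unfolding cl_def by auto
  have cl1: "1 \<le> t \<Longrightarrow> cl t = 1" "t \<le> 0 \<Longrightarrow> cl t = 0" for t unfolding cl_def by auto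
  define \<phi> where "\<phi> n x = max (cl (real n * (x - y))) (max (cl (1 - real n * x)) (cl (1 + real n * (x - 2*pi))))" for n::nat and x
  have \<phi>c: "continuous_on ?I (\<phi> n)" for n unfolding \<phi>_def cl_def by (intro continuous_intros)
  have \<phi>b: "\<bar>\<phi> n x\<bar> \<le> 1" for n x unfolding \<phi>_def using cl01 by (auto simp: max_def)
  have \<phi>1: "max a (max b c) = 1" if "a \<le> 1" "b \<le> 1" "c \<le> 1" "a = 1 \<or> b = 1 \<or> c = 1" for a b c :: real
    using that by (auto simp: max_def)
  have \<phi>p: "\<phi> n 0 = \<phi> n (2*pi)" for n
  proof -
    have "\<phi> n 0 = 1" unfolding \<phi>_def by (rule \<phi>1) (use cl01 cl1 in auto)
    moreover have "\<phi> n (2*pi) = 1" unfolding \<phi>_def by (rule \<phi>1) (use cl01 cl1 in auto)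
    ultimately show ?thesis by simp
  qed
  have zero: "(LINT x:?I|lebesgue. g x * \<phi> n x) = 0" for n
    by (rule periodic_int[OF g hz \<phi>c \<phi>p])
  have ptw: "(\<lambda>n. \<phi> n x) \<longlonglongrightarrow> indicator {y<..} x" if x: "0 < x" "x < 2*pi" for x
  proof (cases "y < x")
    case True
    have ev: "eventually (\<lambda>n. real n * (x-y) \<ge> 1) sequentially" using True by (intro eventually_ge_inv) simp
    from ev have "eventually (\<lambda>n. \<phi> n x = 1) sequentially"
    proof (rule eventually_mono)
      fix n assume "real n * (x - y) \<ge> 1"
      then show "\<phi> n x = 1" unfolding \<phi>_def by (intro \<phi>1) (use cl01 cl1 in auto)
    qed
    then show ?thesis using True by (simp add: tendsto_eventually)
  next
    case False
    have ev: "eventually (\<lambda>n. real n * x \<ge> 1 \<and> real n * (2*pi - x) \<ge> 1) sequentially"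
      using x by (intro eventually_conj eventually_ge_inv) auto
    from ev have "eventually (\<lambda>n. \<phi> n x = 0) sequentially"
    proof (rule eventually_mono)
      fix n assume n: "real n * x \<ge> 1 \<and> real n * (2*pi - x) \<ge> 1"
      have a: "cl (real n * (x - y)) = 0" using False by (intro cl1(2)) (simp add: mult_nonneg_nonpos)
      have b: "cl (1 - real n * x) = 0" using n by (intro cl1(2)) simp
      have c: "cl (1 + real n * (x - 2*pi)) = 0" using n by (intro cl1(2)) (simp add: algebra_simps)
      show "\<phi> n x = 0" unfolding \<phi>_def a b c by simp
    qed
    then show ?thesis using False by (simp add: tendsto_eventually)
  qed
  have gm: "(\<lambda>x. indicator ?I x *\<^sub>R g x) \<in> borel_measurable lebesgue"
    using g unfolding set_integrable_def by auto
  have gi: "integrable lebesgue (\<lambda>x. indicator ?I x *\<^sub>R g x)" using g unfolding set_integrable_def .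
  have sm: "(\<lambda>x. indicator ?I x *\<^sub>R (g x * \<phi> n x)) \<in> borel_measurable lebesgue" for n
    using int_cont_real[OF g \<phi>c] unfolding set_integrable_def by auto
  have [measurable]: "(\<lambda>x::real. x) \<in> borel_measurable lebesgue" by (rule measurable_completion) simp
  have fm: "(\<lambda>x. indicator ?I x *\<^sub>R (indicator {y<..} x * g x)) \<in> borel_measurable lebesgue"
  proof -
    have "(\<lambda>x. indicator {y<..} x * (indicator ?I x *\<^sub>R g x)) \<in> borel_measurable lebesgue"
      using gm by measurable
    then show ?thesis by (simp add: mult.left_commute)
  qed
  have ae0: "AE x in lebesgue. x \<noteq> 0" by (rule AE_completion) (rule AE_lborel_singleton)
  have ae2: "AE x in lebesgue. x \<noteq> 2*pi" by (rule AE_completion) (rule AE_lborel_singleton)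
  have lim: "AE x in lebesgue. (\<lambda>n. indicator ?I x *\<^sub>R (g x * \<phi> n x)) \<longlonglongrightarrow> indicator ?I x *\<^sub>R (indicator {y<..} x * g x)"
    using ae0 ae2
  proof eventually_elim
    case (elim x)
    show ?case
    proof (cases "x \<in> ?I")
      case True
      then have "0 < x" "x < 2*pi" using elim by auto
      from tendsto_mult_left[OF ptw[OF this], of "g x"] show ?thesis using True by (simp add: mult.commute)
    qed simp
  qed
  have "(\<lambda>n. LINT x|lebesgue. indicator ?I x *\<^sub>R (g x * \<phi> n x)) \<longlonglongrightarrow> (LINT x|lebesgue. indicator ?I x *\<^sub>R (indicator {y<..} x * g x))"
  proof (rule integral_dominated_convergence[OF fm sm _ lim])
    show "integrable lebesgue (\<lambda>x. norm (indicator ?I x *\<^sub>R g x))" using gi by simp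
    show "AE x in lebesgue. norm (indicator ?I x *\<^sub>R (g x * \<phi> n x)) \<le> norm (indicator ?I x *\<^sub>R g x)" for n
    proof (rule AE_I2)
      fix x
      have "\<bar>g x * \<phi> n x\<bar> \<le> \<bar>g x\<bar>" using \<phi>b[of n x] by (simp add: abs_mult mult_left_le)
      then show "norm (indicator ?I x *\<^sub>R (g x * \<phi> n x)) \<le> norm (indicator ?I x *\<^sub>R g x)"
        by (simp add: indicator_def)
    qed
  qed
  moreover have "(\<lambda>n. LINT x|lebesgue. indicator ?I x *\<^sub>R (g x * \<phi> n x)) = (\<lambda>n. 0)"
    using zero unfolding set_lebesgue_integral_def by simp
  ultimately have "(\<lambda>n. 0::real) \<longlonglongrightarrow> (LINT x|lebesgue. indicator ?I x *\<^sub>R (indicator {y<..} x * g x))"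
    by simp
  then show ?thesis unfolding set_lebesgue_integral_def by (simp add: LIMSEQ_const_iff)
qed

lemma U1:
  fixes g :: "real \<Rightarrow> real"
  assumes g: "set_integrable lebesgue {0..2*pi} g"
    and hz: "\<And>k::int. (LINT x:{0..2*pi}|lebesgue. complex_of_real (g x) * cis (- (real_of_int k * x))) = 0"
  shows "AE x in lebesgue. x \<in> {0..2*pi} \<longrightarrow> g x = 0"
proof -
  let ?I = "{0..2*pi}"
  have "AE x in lebesgue. indicator ?I x * g x = 0"
  proof (rule L0)
    show "integrable lebesgue (\<lambda>x. indicator ?I x * g x)" using g unfolding set_integrable_def by simp
    show "(LINT x|lebesgue. indicator {y<..} x * (indicator ?I x * g x)) = 0" for y
      using U1c[OF g hz, of y] unfolding set_lebesgue_integral_def by (simp add: mult.left_commute)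
  qed
  then show ?thesis by eventually_elim (auto simp: indicator_def)
qed


lemma lint_eq_hk:
  fixes f :: "real \<Rightarrow> 'b::euclidean_space"
  assumes "continuous_on {a..b} f"
  shows "(LINT x:{a..b}|lebesgue. f x) = integral {a..b} f"
  using assms by (intro set_lebesgue_integral_eq_integral(2) absolutely_integrable_continuous_real)

lemma cis_int:
  fixes j :: int
  shows "(LINT x:{0..2*pi}|lebesgue. cis (real_of_int j * x)) = (if j = 0 then 2*pi else 0)"
proof -
  have "(LINT x:{0..2*pi}|lebesgue. cis (real_of_int j * x)) = integral {0..2*pi} (\<lambda>x. cis (real_of_int j * x))"
    by (rule lint_eq_hk) (auto intro!: continuous_intros)
  also have "\<dots> = (if j = 0 then 2*pi else 0)"
  proof (cases "j = 0")
    case True then show ?thesis by (simp add: scaleR_conv_of_real)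
  next
    case False
    let ?F = "\<lambda>x. cis (real_of_int j * x) / (\<i> * of_int j)"
    have d: "(?F has_vector_derivative cis (real_of_int j * x)) (at x within {0..2*pi})" for x
    proof -
      have "((\<lambda>z. exp (\<i> * of_int j * z) / (\<i> * of_int j)) has_field_derivative exp (\<i> * of_int j * of_real x)) (at (of_real x))"
        using False by (auto intro!: derivative_eq_intros simp: field_simps)
      from has_vector_derivative_real_field[OF this]
      have "((\<lambda>x. exp (\<i> * of_int j * of_real x) / (\<i> * of_int j)) has_vector_derivative exp (\<i> * of_int j * of_real x)) (at x within {0..2*pi})" .
      then show ?thesis by (simp add: cis_conv_exp mult.assoc)
    qed
    have "((\<lambda>x. cis (real_of_int j * x)) has_integral (?F (2*pi) - ?F 0)) {0..2*pi}"
      by (rule fundamental_theorem_of_calculus) (use d in auto)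
    moreover have "cis (real_of_int j * (2*pi)) = 1"
    proof -
      have "cis (real_of_int j * (2*pi)) = cis (2 * pi * real_of_int j)" by (simp add: mult.commute)
      also have "\<dots> = 1" by (simp add: cis_conv_exp exp_eq_1 mult.commute mult.left_commute)
      finally show ?thesis .
    qed
    ultimately show ?thesis using False by (simp add: integral_unique)
  qed
  finally show ?thesis .
qed


lemma cont_si:
  fixes F :: "real \<Rightarrow> 'b::euclidean_space"
  shows "continuous_on {a..b} F \<Longrightarrow> set_integrable lebesgue {a..b} F"
  by (rule absolutely_integrable_continuous_real)

lemma L2_int:
  assumes "L2_per f" shows "set_integrable lebesgue {0..2*pi} f"
proof (rule set_integrable_bound)
  show "set_integrable lebesgue {0..2*pi} (\<lambda>x. 1 + (f x)^2)"
    using assms unfolding L2_per_def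
    by (intro set_integral_add(1)[OF cont_si]) (auto intro: continuous_intros)
  show "set_borel_measurable lebesgue {0..2*pi} f"
  proof -
    have [measurable]: "f \<in> borel_measurable lebesgue" using assms by (auto simp: L2_per_def)
    have [measurable]: "(\<lambda>x::real. x) \<in> borel_measurable lebesgue" by (rule measurable_completion) simp
    show ?thesis unfolding set_borel_measurable_def by measurable
  qed
  show "AE x in lebesgue. x \<in> {0..2*pi} \<longrightarrow> norm (f x) \<le> norm (1 + (f x)^2)"
  proof (rule AE_I2, rule impI)
    fix x
    have "2 * \<bar>f x\<bar> * 1 \<le> \<bar>f x\<bar>^2 + 1^2" by (rule sum_squares_bound)
    moreover have "0 \<le> (f x)^2" by simp
    ultimately have "\<bar>f x\<bar> \<le> 1 + (f x)^2" by simp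
    then show "norm (f x) \<le> norm (1 + (f x)^2)" by simp
  qed
qed

lemma L2_prod:
  assumes "L2_per f" "L2_per g" shows "set_integrable lebesgue {0..2*pi} (\<lambda>x. f x * g x)"
proof (rule set_integrable_bound)
  show "set_integrable lebesgue {0..2*pi} (\<lambda>x. (f x)^2 + (g x)^2)"
    using assms unfolding L2_per_def by (intro set_integral_add(1)) auto
  show "set_borel_measurable lebesgue {0..2*pi} (\<lambda>x. f x * g x)"
  proof -
    have [measurable]: "f \<in> borel_measurable lebesgue" "g \<in> borel_measurable lebesgue"
      using assms by (auto simp: L2_per_def)
    have [measurable]: "(\<lambda>x::real. x) \<in> borel_measurable lebesgue" by (rule measurable_completion) simp
    show ?thesis unfolding set_borel_measurable_def by measurable
  qed
  show "AE x in lebesgue. x \<in> {0..2*pi} \<longrightarrow> norm (f x * g x) \<le> norm ((f x)^2 + (g x)^2)"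
  proof (rule AE_I2, rule impI)
    fix x
    have "\<bar>f x * g x\<bar> \<le> (f x)^2 + (g x)^2"
    proof -
      have "0 \<le> \<bar>f x\<bar> * \<bar>g x\<bar>" by simp
      moreover have "2 * \<bar>f x\<bar> * \<bar>g x\<bar> \<le> (f x)^2 + (g x)^2" using sum_squares_bound[of "\<bar>f x\<bar>" "\<bar>g x\<bar>"] by simp
      moreover have "\<bar>f x * g x\<bar> = \<bar>f x\<bar> * \<bar>g x\<bar>" by (rule abs_mult)
      ultimately show ?thesis by linarith
    qed
    then show "norm (f x * g x) \<le> norm ((f x)^2 + (g x)^2)" by simp
  qed
qed

lemma fcoeff_conj:
  "fcoeff f (-k) = cnj (fcoeff f k)"
proof -
  have "cnj (LINT x:{0..2*pi}|lebesgue. complex_of_real (f x) * cis (- (real_of_int k * x)))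
      = (LINT x:{0..2*pi}|lebesgue. complex_of_real (f x) * cis (- (real_of_int (-k) * x)))"
  proof -
    have e: "(\<lambda>x. indicat_real {0..2*pi} x *\<^sub>R (complex_of_real (f x) * cis (- (real_of_int (-k) * x))))
       = (\<lambda>x. cnj (indicat_real {0..2*pi} x *\<^sub>R (complex_of_real (f x) * cis (- (real_of_int k * x)))))"
      by (auto simp: fun_eq_iff cis_cnj)
    show ?thesis unfolding set_lebesgue_integral_def e by (rule Bochner_Integration.integral_cnj[symmetric])
  qed
  then show ?thesis unfolding fcoeff_def by simp
qed

lemma cis_lip: "cmod (cis s - cis t) \<le> \<bar>s - t\<bar>"
proof -
  let ?u = "s - t"
  have "cis s - cis t = cis t * (cis ?u - 1)" by (simp add: algebra_simps cis_mult)
  then have e: "cmod (cis s - cis t) = cmod (cis ?u - 1)" by (simp add: norm_mult)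
  have "(cmod (cis ?u - 1))^2 = (cos ?u - 1)^2 + (sin ?u)^2" by (simp add: cmod_power2)
  also have "\<dots> = 2 - 2 * cos ?u" by (simp add: power2_diff sin_squared_eq algebra_simps)
  also have "\<dots> = 4 * (sin (?u/2))^2"
  proof -
    have "cos (2 * (?u/2)) = 1 - 2 * (sin (?u/2))^2" by (rule cos_double_sin)
    then have "cos ?u = 1 - 2 * (sin (?u/2))^2" by (simp only: mult_2 field_sum_of_halves)
    then show ?thesis by simp
  qed
  also have "\<dots> \<le> 4 * (?u/2)^2"
  proof -
    have "(sin (?u/2))^2 \<le> (?u/2)^2" using abs_sin_x_le_abs_x[of "?u/2"] by (simp only: abs_le_square_iff)
    then show ?thesis by simp
  qed
  also have "\<dots> = ?u^2" by (simp add: power2_eq_square)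
  finally have "(cmod (cis ?u - 1))^2 \<le> ?u^2" .
  then have "\<bar>cmod (cis ?u - 1)\<bar> \<le> \<bar>?u\<bar>" by (simp only: abs_le_square_iff)
  then have "cmod (cis ?u - 1) \<le> \<bar>?u\<bar>" by simp
  then show ?thesis using e by simp
qed

lemma P_bound:
  fixes \<mu> :: real and P :: "int \<Rightarrow> real"
  assumes mu: "\<mu> > 0" and P: "P = P_rB \<mu> \<or> P = P_rBW \<mu>" and k: "k \<noteq> 0"
  shows "P k > 0" "P k * \<bar>real_of_int k\<bar> \<le> 2/\<mu>^2 + 1/\<mu>"
proof -
  have kk: "\<bar>real_of_int k\<bar> \<ge> 1" using k by linarith
  have a: "2/\<mu>^2 \<ge> 0" "1/\<mu> \<ge> 0" using mu by auto
  from P show "P k > 0"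
  proof
    assume "P = P_rB \<mu>" then show ?thesis by (simp add: P_rB_def add_pos_nonneg)
  next
    assume "P = P_rBW \<mu>"
    show ?thesis
    proof (cases "k > 0")
      case True
      then have m: "\<mu> * real_of_int k > 0" using mu by simp
      then have "tanh (\<mu> * real_of_int k) > 0" by simp
      then show ?thesis using m k \<open>P = P_rBW \<mu>\<close> by (simp add: P_rBW_def)
    next
      case False
      then have k0: "k < 0" using k by simp
      then have m: "\<mu> * real_of_int k < 0" using mu by (simp add: mult_pos_neg)
      then have "tanh (\<mu> * real_of_int k) < 0" by simp
      then show ?thesis using m k \<open>P = P_rBW \<mu>\<close> by (simp add: P_rBW_def divide_neg_neg)
    qed
  qed
  from P show "P k * \<bar>real_of_int k\<bar> \<le> 2/\<mu>^2 + 1/\<mu>"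
  proof
    assume Pe: "P = P_rB \<mu>"
    let ?K = "\<bar>real_of_int k\<bar>"
    have "P k * ?K = ?K / (1 + \<mu>^2 * ?K^2 / 2)" by (simp add: Pe P_rB_def)
    also have "\<dots> \<le> ?K / (\<mu>^2 * ?K^2 / 2)"
    proof (rule divide_left_mono)
      have "0 < \<mu>^2 * ?K^2 / 2" using mu kk by simp
      then show "0 < (1 + \<mu>^2 * ?K^2 / 2) * (\<mu>^2 * ?K^2 / 2)" by (simp add: add_pos_pos)
    qed simp_all
    also have "\<dots> = 2 / (\<mu>^2 * ?K)"
    proof -
      have "K / (\<mu>^2 * K^2 / 2) = 2 / (\<mu>^2 * K)" if "K \<ge> 1" for K using that mu by (simp add: power2_eq_square field_simps)
      then show ?thesis using kk by blast
    qed
    also have "\<dots> \<le> 2 / \<mu>^2"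
    proof (rule divide_left_mono)
      show "\<mu>^2 \<le> \<mu>^2 * ?K" using mult_left_mono[of 1 ?K "\<mu>^2"] kk by simp
      show "0 < \<mu>^2 * ?K * \<mu>^2" using kk mu by simp
    qed simp
    finally show ?thesis using a by linarith
  next
    assume Pe: "P = P_rBW \<mu>"
    have "P k * \<bar>real_of_int k\<bar> = \<bar>tanh (\<mu> * real_of_int k)\<bar> / \<mu>"
    proof -
      have "P k = tanh (\<mu> * real_of_int k) / (\<mu> * real_of_int k)" using k by (simp add: Pe P_rBW_def)
      also have "\<dots> = \<bar>tanh (\<mu> * real_of_int k)\<bar> / (\<mu> * \<bar>real_of_int k\<bar>)"
      proof (cases "k > 0")
        case True
        then have "\<mu> * real_of_int k > 0" using mu by simp
        then show ?thesis using True by simp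
      next
        case False
        then have k0: "k < 0" using k by simp
        then have m: "\<mu> * real_of_int k < 0" using mu by (simp add: mult_pos_neg)
        then have "tanh (\<mu> * real_of_int k) < 0" by simp
        then have "\<bar>tanh (\<mu> * real_of_int k)\<bar> = - tanh (\<mu> * real_of_int k)" by simp
        moreover have "\<mu> * \<bar>real_of_int k\<bar> = - (\<mu> * real_of_int k)" using k0 by simp
        ultimately show ?thesis by simp
      qed
      finally have "P k = \<bar>tanh (\<mu> * real_of_int k)\<bar> / (\<mu> * \<bar>real_of_int k\<bar>)" .
      moreover have "\<bar>real_of_int k\<bar> \<noteq> 0" using k by simp
      ultimately show ?thesis using mu by simp
    qed
    also have "\<dots> \<le> 1 / \<mu>"
    proof (rule divide_right_mono)
      have "tanh (\<mu> * real_of_int k) < 1" "-1 < tanh (\<mu> * real_of_int k)"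
        using tanh_real_lt_1 tanh_real_gt_neg1 by auto
      then show "\<bar>tanh (\<mu> * real_of_int k)\<bar> \<le> 1" by (simp only: abs_le_iff) linarith
    qed (use mu in simp)
    finally show ?thesis using a by linarith
  qed
qed


definition ser :: "(nat \<Rightarrow> complex) \<Rightarrow> real \<Rightarrow> real" where
  "ser a x = (\<Sum>n. 2 * Re (a n * cis (real (Suc n) * x)))"

lemma term_bound: "\<bar>2 * Re (c * cis t)\<bar> \<le> 2 * cmod c"
proof -
  have "\<bar>Re (c * cis t)\<bar> \<le> cmod (c * cis t)" by (rule abs_Re_le_cmod)
  then show ?thesis by (simp add: norm_mult)
qed

lemma ser_summable:
  assumes s: "summable (\<lambda>n. real (Suc n) * cmod (a n))"
  shows "summable (\<lambda>n. cmod (a n))" "summable (\<lambda>n. 2 * Re (a n * cis (real (Suc n) * x)))"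
proof -
  show sa: "summable (\<lambda>n. cmod (a n))"
    by (rule summable_comparison_test[OF _ s]) (auto intro!: exI[of _ 0] mult_le_cancel_right1[THEN iffD2])
  show "summable (\<lambda>n. 2 * Re (a n * cis (real (Suc n) * x)))"
    by (rule summable_comparison_test[OF _ summable_mult[OF sa, of 2]]) (use term_bound in auto)
qed

lemma ser_lip:
  assumes s: "summable (\<lambda>n. real (Suc n) * cmod (a n))"
  shows "\<bar>ser a x - ser a y\<bar> \<le> (\<Sum>n. 2 * (real (Suc n) * cmod (a n))) * \<bar>x - y\<bar>"
proof -
  let ?t = "\<lambda>x n. 2 * Re (a n * cis (real (Suc n) * x))"
  have d: "ser a x - ser a y = (\<Sum>n. ?t x n - ?t y n)"
    unfolding ser_def by (rule suminf_diff) (use ser_summable[OF s] in auto)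
  have b: "\<bar>?t x n - ?t y n\<bar> \<le> 2 * (real (Suc n) * cmod (a n)) * \<bar>x - y\<bar>" for n
  proof -
    have "?t x n - ?t y n = 2 * Re (a n * (cis (real (Suc n) * x) - cis (real (Suc n) * y)))"
      by (simp add: algebra_simps)
    also have "\<bar>\<dots>\<bar> \<le> 2 * cmod (a n * (cis (real (Suc n) * x) - cis (real (Suc n) * y)))"
      using abs_Re_le_cmod[of "a n * (cis (real (Suc n) * x) - cis (real (Suc n) * y))"]
      by (simp only: abs_mult abs_numeral)
    also have "\<dots> = 2 * cmod (a n) * cmod (cis (real (Suc n) * x) - cis (real (Suc n) * y))"
      by (simp add: norm_mult)
    also have "\<dots> \<le> 2 * cmod (a n) * \<bar>real (Suc n) * x - real (Suc n) * y\<bar>"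
      by (intro mult_left_mono cis_lip) auto
    also have "\<bar>real (Suc n) * x - real (Suc n) * y\<bar> = real (Suc n) * \<bar>x - y\<bar>"
      by (simp add: right_diff_distrib[symmetric] abs_mult)
    finally show ?thesis by (simp add: algebra_simps)
  qed
  have sb: "summable (\<lambda>n. 2 * (real (Suc n) * cmod (a n)) * \<bar>x - y\<bar>)"
    by (intro summable_mult2 summable_mult s)
  have sd: "summable (\<lambda>n. \<bar>?t x n - ?t y n\<bar>)"
    by (rule summable_comparison_test[OF _ sb]) (use b in auto)
  have "\<bar>ser a x - ser a y\<bar> \<le> (\<Sum>n. \<bar>?t x n - ?t y n\<bar>)"
    unfolding d by (rule summable_rabs[OF sd])
  also have "\<dots> \<le> (\<Sum>n. 2 * (real (Suc n) * cmod (a n)) * \<bar>x - y\<bar>)"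
    by (rule suminf_le[OF b sd sb])
  also have "\<dots> = (\<Sum>n. 2 * (real (Suc n) * cmod (a n))) * \<bar>x - y\<bar>"
    by (rule suminf_mult2[symmetric]) (intro summable_mult s)
  finally show ?thesis .
qed

lemma ser_cont:
  assumes s: "summable (\<lambda>n. real (Suc n) * cmod (a n))"
  shows "continuous_on S (ser a)"
proof -
  let ?L = "(\<Sum>n. 2 * (real (Suc n) * cmod (a n)))"
  have "?L \<ge> 0" by (intro suminf_nonneg summable_mult s) auto
  then have "?L-lipschitz_on S (ser a)"
    by (intro lipschitz_onI) (use ser_lip[OF s] in \<open>auto simp: dist_real_def\<close>)
  then show ?thesis by (rule lipschitz_on_continuous_on)
qed


lemma ser_term_int:
  fixes k :: int
  shows "(LINT x:{0..2*pi}|lebesgue. complex_of_real (2 * Re (c * cis (real (Suc n) * x))) * cis (- (real_of_int k * x)))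
     = 2*pi * ((if int (Suc n) = k then c else 0) + (if int (Suc n) = -k then cnj c else 0))"
proof -
  let ?m = "int (Suc n)"
  have e: "complex_of_real (2 * Re (c * cis (real (Suc n) * x))) * cis (- (real_of_int k * x))
     = c * cis (real_of_int (?m - k) * x) + cnj c * cis (real_of_int (- ?m - k) * x)" for x
  proof -
    have "complex_of_real (2 * Re (c * cis (real (Suc n) * x))) = c * cis (real (Suc n) * x) + cnj c * cis (- (real (Suc n) * x))"
    proof -
      have "complex_of_real (2 * Re (c * cis (real (Suc n) * x))) = c * cis (real (Suc n) * x) + cnj (c * cis (real (Suc n) * x))"
        by (simp only: complex_add_cnj)
      also have "cnj (c * cis (real (Suc n) * x)) = cnj c * cis (- (real (Suc n) * x))"
        by (simp only: complex_cnj_mult cis_cnj)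
      finally show ?thesis .
    qed
    moreover have "cis (real (Suc n) * x) * cis (- (real_of_int k * x)) = cis (real_of_int (?m - k) * x)"
      by (simp add: cis_mult algebra_simps)
    moreover have "cis (- (real (Suc n) * x)) * cis (- (real_of_int k * x)) = cis (real_of_int (- ?m - k) * x)"
      by (simp add: cis_mult algebra_simps)
    ultimately show ?thesis by (simp add: distrib_right mult.assoc)
  qed
  have i1: "set_integrable lebesgue {0..2*pi} (\<lambda>x. c * cis (real_of_int (?m - k) * x))"
    by (intro cont_si continuous_intros)
  have i2: "set_integrable lebesgue {0..2*pi} (\<lambda>x. cnj c * cis (real_of_int (- ?m - k) * x))"
    by (intro cont_si continuous_intros)
  have "(LINT x:{0..2*pi}|lebesgue. complex_of_real (2 * Re (c * cis (real (Suc n) * x))) * cis (- (real_of_int k * x)))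
      = (LINT x:{0..2*pi}|lebesgue. c * cis (real_of_int (?m - k) * x) + cnj c * cis (real_of_int (- ?m - k) * x))"
    by (simp only: e)
  also have "\<dots> = c * (LINT x:{0..2*pi}|lebesgue. cis (real_of_int (?m - k) * x)) + cnj c * (LINT x:{0..2*pi}|lebesgue. cis (real_of_int (- ?m - k) * x))"
    by (simp only: set_integral_add(2)[OF i1 i2] set_integral_mult_right)
  also have "\<dots> = 2*pi * ((if ?m = k then c else 0) + (if ?m = -k then cnj c else 0))"
    by (simp only: cis_int) (auto simp: algebra_simps)
  finally show ?thesis .
qed

lemma ser_coeff:
  fixes k :: int
  assumes s: "summable (\<lambda>n. real (Suc n) * cmod (a n))"
  shows "(LINT x:{0..2*pi}|lebesgue. complex_of_real (ser a x) * cis (- (real_of_int k * x)))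
     = 2*pi * (if k > 0 then a (nat k - 1) else if k < 0 then cnj (a (nat (-k) - 1)) else 0)"
proof -
  let ?I = "{0..2*pi}"
  let ?t = "\<lambda>n x. 2 * Re (a n * cis (real (Suc n) * x))"
  define f where "f n x = indicator ?I x *\<^sub>R (complex_of_real (?t n x) * cis (- (real_of_int k * x)))" for n x
  have sa: "summable (\<lambda>n. cmod (a n))" by (rule ser_summable(1)[OF s])
  have fi: "integrable lebesgue (f n)" for n
  proof -
    have "continuous_on ?I (\<lambda>x. complex_of_real (?t n x) * cis (- (real_of_int k * x)))"
      by (intro continuous_intros)
    from cont_si[OF this] show ?thesis unfolding f_def set_integrable_def .
  qed
  have fb: "norm (f n x) \<le> indicator ?I x * (2 * cmod (a n))" for n x
  proof -
    have "norm (f n x) = \<bar>indicator ?I x\<bar> * (\<bar>?t n x\<bar> * 1)"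
      unfolding f_def by (simp only: norm_scaleR norm_mult norm_cis norm_of_real)
    also have "\<dots> = indicator ?I x * \<bar>?t n x\<bar>" by simp
    also have "\<dots> \<le> indicator ?I x * (2 * cmod (a n))"
      by (rule mult_left_mono[OF term_bound]) simp
    finally show ?thesis .
  qed
  have "AE x in lebesgue. summable (\<lambda>n. norm (f n x))"
  proof (rule AE_I2)
    fix x show "summable (\<lambda>n. norm (f n x))"
      by (rule summable_comparison_test[OF _ summable_mult[OF summable_mult[OF sa, of 2], of "indicator ?I x"]])
         (use fb in \<open>auto simp: mult_ac\<close>)
  qed
  moreover have "summable (\<lambda>n. LINT x|lebesgue. norm (f n x))"
  proof -
    have ii: "integrable lebesgue (\<lambda>x. indicator ?I x :: real)"
      using cont_si[of 0 "2*pi" "\<lambda>x. 1::real"] unfolding set_integrable_def by simp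
    have b: "(LINT x|lebesgue. norm (f n x)) \<le> (2 * cmod (a n)) * (LINT x|lebesgue. indicator ?I x)" for n
    proof -
      have "(LINT x|lebesgue. norm (f n x)) \<le> (LINT x|lebesgue. indicator ?I x * (2 * cmod (a n)))"
        by (rule integral_mono) (use fi ii fb in auto)
      also have "\<dots> = (2 * cmod (a n)) * (LINT x|lebesgue. indicator ?I x)" by simp
      finally show ?thesis .
    qed
    show ?thesis
    proof (rule summable_comparison_test[OF _ summable_mult2[OF summable_mult[OF sa, of 2], of "LINT x|lebesgue. indicator ?I x"]])
      show "\<exists>N. \<forall>n\<ge>N. norm (LINT x|lebesgue. norm (f n x)) \<le> 2 * cmod (a n) * (LINT x|lebesgue. indicator ?I x)"
      proof (intro exI allI impI)
        fix n N :: nat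
        have "0 \<le> (LINT x|lebesgue. norm (f n x))" by (rule Bochner_Integration.integral_nonneg) simp
        then show "norm (LINT x|lebesgue. norm (f n x)) \<le> 2 * cmod (a n) * (LINT x|lebesgue. indicator ?I x)"
          using b[of n] by simp
      qed
    qed
  qed
  ultimately have int_eq: "(LINT x|lebesgue. (\<Sum>n. f n x)) = (\<Sum>n. LINT x|lebesgue. f n x)"
    by (intro integral_suminf fi)
  have sum_eq: "(\<Sum>n. f n x) = indicator ?I x *\<^sub>R (complex_of_real (ser a x) * cis (- (real_of_int k * x)))" for x
  proof -
    have "(\<lambda>n. ?t n x) sums ser a x" unfolding ser_def by (rule summable_sums[OF ser_summable(2)[OF s]])
    then have "(\<lambda>n. complex_of_real (?t n x)) sums complex_of_real (ser a x)" by (rule sums_of_real)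
    then have "(\<lambda>n. complex_of_real (?t n x) * cis (- (real_of_int k * x))) sums (complex_of_real (ser a x) * cis (- (real_of_int k * x)))"
      by (rule sums_mult2)
    then have "(\<lambda>n. f n x) sums (indicator ?I x *\<^sub>R (complex_of_real (ser a x) * cis (- (real_of_int k * x))))"
      unfolding f_def by (rule sums_scaleR_right)
    then show ?thesis by (rule sums_unique[symmetric])
  qed
  have "(LINT x:?I|lebesgue. complex_of_real (ser a x) * cis (- (real_of_int k * x)))
      = (\<Sum>n. LINT x|lebesgue. f n x)"
    unfolding set_lebesgue_integral_def int_eq[symmetric] sum_eq ..
  also have "\<dots> = (\<Sum>n. 2*pi * ((if int (Suc n) = k then a n else 0) + (if int (Suc n) = -k then cnj (a n) else 0)))"
    using ser_term_int[of "a _" _ k] unfolding f_def set_lebesgue_integral_def by simp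
  also have "\<dots> = 2*pi * (if k > 0 then a (nat k - 1) else if k < 0 then cnj (a (nat (-k) - 1)) else 0)"
  proof (rule sums_unique[symmetric])
    consider "k > 0" | "k < 0" | "k = 0" by linarith
    then show "(\<lambda>n. 2*pi * ((if int (Suc n) = k then a n else 0) + (if int (Suc n) = -k then cnj (a n) else 0)))
        sums (2*pi * (if k > 0 then a (nat k - 1) else if k < 0 then cnj (a (nat (-k) - 1)) else 0))"
    proof cases
      case 1
      have "(\<lambda>n. 2*pi * ((if int (Suc n) = k then a n else 0) + (if int (Suc n) = -k then cnj (a n) else 0)))
          = (\<lambda>n. if n = nat k - 1 then 2*pi * a n else 0)" using 1 by (auto simp: fun_eq_iff)
      then show ?thesis using 1 sums_single[of "nat k - 1" "\<lambda>n. 2*pi * a n"] by simp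
    next
      case 2
      have "(\<lambda>n. 2*pi * ((if int (Suc n) = k then a n else 0) + (if int (Suc n) = -k then cnj (a n) else 0)))
          = (\<lambda>n. if n = nat (-k) - 1 then 2*pi * cnj (a n) else 0)" using 2 by (auto simp: fun_eq_iff)
      then show ?thesis using 2 sums_single[of "nat (-k) - 1" "\<lambda>n. 2*pi * cnj (a n)"] by simp
    next
      case 3
      then show ?thesis by simp
    qed
  qed
  finally show ?thesis .
qed


lemma a_summable:
  fixes \<mu> :: real and P :: "int \<Rightarrow> real" and q w :: "real \<Rightarrow> real"
  assumes mu: "\<mu> > 0" and P: "P = P_rB \<mu> \<or> P = P_rBW \<mu>"
    and H2: "(\<lambda>k::int. (real_of_int k)^4 * (cmod (fcoeff q k))^2) summable_on UNIV"
    and hw: "\<And>k. fcoeff w k = complex_of_real (P k) * (\<i> * of_int k) * fcoeff q k"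
  shows "summable (\<lambda>n. real (Suc n) * cmod (fcoeff w (int (Suc n))))"
proof -
  define Q where "Q n = cmod (fcoeff q (int (Suc n)))" for n
  define C where "C = 2/\<mu>^2 + 1/\<mu>"
  have "(\<lambda>k::int. (real_of_int k)^4 * (cmod (fcoeff q k))^2) summable_on (range (\<lambda>n::nat. int (Suc n)))"
    by (rule summable_on_subset_banach[OF H2]) auto
  then have ro: "((\<lambda>k::int. (real_of_int k)^4 * (cmod (fcoeff q k))^2) \<circ> (\<lambda>n::nat. int (Suc n))) summable_on UNIV"
    by (subst summable_on_reindex[symmetric]) (auto simp: inj_on_def)
  have s4: "summable (\<lambda>n. real (Suc n)^4 * (Q n)^2)"
  proof -
    from summable_on_imp_summable[OF ro] show ?thesis unfolding Q_def o_def by simp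
  qed
  have s2: "summable (\<lambda>n. inverse (real (Suc n) ^ 2))"
    using inverse_power_summable[of 2, where 'a=real] by (subst summable_Suc_iff) simp
  have b: "real (Suc n) * cmod (fcoeff w (int (Suc n))) \<le> C * ((real (Suc n)^4 * (Q n)^2 + inverse (real (Suc n) ^ 2)) / 2)" for n
  proof -
    let ?m = "real (Suc n)"
    have Pm: "P (int (Suc n)) > 0" "P (int (Suc n)) * \<bar>real_of_int (int (Suc n))\<bar> \<le> C"
      using P_bound[OF mu P, of "int (Suc n)"] by (auto simp: C_def)
    have "cmod (fcoeff w (int (Suc n))) = P (int (Suc n)) * ?m * Q n"
    proof -
      have "cmod (1 + complex_of_nat n) = 1 + real n"
        using norm_of_nat[of "Suc n", where 'a=complex] by simp
      then show ?thesis using Pm(1) by (simp add: hw Q_def norm_mult)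
    qed
    then have "?m * cmod (fcoeff w (int (Suc n))) = (P (int (Suc n)) * ?m) * (?m * Q n)" by simp
    also have "\<dots> \<le> C * (?m * Q n)"
      using Pm(2) by (intro mult_right_mono) (auto simp: Q_def)
    also have "?m * Q n \<le> ((?m^2 * Q n)^2 + (inverse ?m)^2) / 2"
    proof -
      have "2 * (?m^2 * Q n) * inverse ?m \<le> (?m^2 * Q n)^2 + (inverse ?m)^2" by (rule sum_squares_bound)
      then have h1: "2 * ((?m^2 * Q n) * inverse ?m) \<le> (?m^2 * Q n)^2 + (inverse ?m)^2" by (simp only: mult.assoc)
      have eq: "(?m^2 * Q n) * inverse ?m = ?m * Q n" by (simp add: power2_eq_square field_simps)
      have "2 * (?m * Q n) \<le> (?m^2 * Q n)^2 + (inverse ?m)^2" using h1 unfolding eq .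
      moreover have gen: "2 * A \<le> B \<Longrightarrow> A \<le> B / 2" for A B :: real by linarith
      ultimately show ?thesis by blast
    qed
    then have "C * (?m * Q n) \<le> C * (((?m^2 * Q n)^2 + (inverse ?m)^2) / 2)"
      using mu by (intro mult_left_mono) (auto simp: C_def)
    also have "((?m^2 * Q n)^2 + (inverse ?m)^2) = ?m^4 * (Q n)^2 + inverse (?m^2)"
      by (simp add: power2_eq_square power4_eq_xxxx field_simps)
    finally show ?thesis .
  qed
  show ?thesis
  proof (rule summable_comparison_test[OF _ summable_mult[OF summable_divide[OF summable_add[OF s4 s2], of 2], of C]])
    show "\<exists>N. \<forall>n\<ge>N. norm (real (Suc n) * cmod (fcoeff w (int (Suc n)))) \<le> C * ((real (Suc n)^4 * (Q n)^2 + inverse (real (Suc n) ^ 2)) / 2)"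
    proof (intro exI allI impI)
      fix n N :: nat
      have "norm (real (Suc n) * cmod (fcoeff w (int (Suc n)))) = real (Suc n) * cmod (fcoeff w (int (Suc n)))"
        by (simp only: real_norm_def abs_mult abs_of_nat abs_norm_cancel)
      then show "norm (real (Suc n) * cmod (fcoeff w (int (Suc n)))) \<le> C * ((real (Suc n)^4 * (Q n)^2 + inverse (real (Suc n) ^ 2)) / 2)"
        using b[of n] by (simp only:)
    qed
  qed
qed


lemma lint_const:
  assumes "a \<le> b" shows "(LINT x:{a..b}|lebesgue. (K::real)) = (b - a) * K"
  using assms by (subst lint_eq_hk) auto

lemma zero_exists:
  fixes W :: "real \<Rightarrow> real"
  assumes c: "continuous_on {0..2*pi} W" and z: "(LINT x:{0..2*pi}|lebesgue. W x) = 0"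
  shows "\<exists>x0\<in>{0..2*pi}. W x0 = 0"
proof -
  let ?I = "{0..2*pi}"
  obtain xm where xm: "xm \<in> ?I" "\<And>y. y \<in> ?I \<Longrightarrow> W xm \<le> W y"
    using continuous_attains_inf[OF compact_Icc _ c] by auto
  obtain xM where xM: "xM \<in> ?I" "\<And>y. y \<in> ?I \<Longrightarrow> W y \<le> W xM"
    using continuous_attains_sup[OF compact_Icc _ c] by auto
  have Wi: "set_integrable lebesgue ?I W" by (rule cont_si[OF c])
  have "(LINT x:?I|lebesgue. W xm) \<le> (LINT x:?I|lebesgue. W x)"
    by (rule set_integral_mono[OF cont_si[OF continuous_on_const] Wi]) (use xm in auto)
  then have m: "W xm \<le> 0" using z pi_gt_zero by (simp add: lint_const mult_le_0_iff)
  have "(LINT x:?I|lebesgue. W x) \<le> (LINT x:?I|lebesgue. W xM)"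
    by (rule set_integral_mono[OF Wi cont_si[OF continuous_on_const]]) (use xM in auto)
  then have M: "W xM \<ge> 0" using z pi_gt_zero by (simp add: lint_const zero_le_mult_iff)
  have "connected (W ` ?I)" by (rule connected_continuous_image[OF c connected_Icc])
  then have "0 \<in> W ` ?I"
  proof (cases "W xm \<le> W xM")
    case True
    then show ?thesis using \<open>connected (W ` ?I)\<close> xm xM m M unfolding connected_iff_interval by blast
  next
    case False
    then show ?thesis using m M by linarith
  qed
  then show ?thesis by auto
qed

lemma final_contra:
  fixes f :: "real \<Rightarrow> real" and c L x0 :: real
  assumes L: "L > 0" and x0: "x0 \<in> {0..2*pi}"
    and fi: "set_integrable lebesgue {0..2*pi} (\<lambda>x. (f x)^2)"
    and ae: "AE x in lebesgue. x \<in> {0..2*pi} \<longrightarrow> c^2 \<le> L^2 * (x - x0)^2 * (f x)^2"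
  shows "c = 0"
proof (rule ccontr)
  assume c0: "c \<noteq> 0"
  let ?I = "{0..2*pi}"
  define F where "F = (LINT x:?I|lebesgue. (f x)^2)"
  have F0: "F \<ge> 0" unfolding F_def set_lebesgue_integral_def
    by (rule Bochner_Integration.integral_nonneg) auto
  define e where "e = min pi (c^2 / (2 * L^2 * (F + 1)))"
  have c2: "c^2 > 0" using c0 by simp
  have e0: "e > 0" unfolding e_def using c2 L F0 by (auto intro!: divide_pos_pos)
  have epi: "e \<le> pi" unfolding e_def by simp
  have ec: "e \<le> c^2 / (2 * L^2 * (F + 1))" unfolding e_def by simp
  obtain a where J: "{a..a+e} \<subseteq> ?I" and Jd: "\<And>x. x \<in> {a..a+e} \<Longrightarrow> \<bar>x - x0\<bar> \<le> e"
  proof (cases "x0 \<le> pi")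
    case True
    show ?thesis by (rule that[of x0]) (use True x0 epi in auto)
  next
    case False
    show ?thesis by (rule that[of "x0 - e"]) (use False x0 epi e0 in auto)
  qed
  let ?J = "{a..a+e}"
  let ?K = "c^2 / (L^2 * e^2)"
  have fJ: "set_integrable lebesgue ?J (\<lambda>x. (f x)^2)"
    by (rule set_integrable_subset[OF fi _ J]) simp
  have aeJ: "AE x in lebesgue. x \<in> ?J \<longrightarrow> ?K \<le> (f x)^2"
    using ae
  proof eventually_elim
    case (elim x)
    show ?case
    proof
      assume xJ: "x \<in> ?J"
      then have "c^2 \<le> L^2 * (x - x0)^2 * (f x)^2" using elim J by auto
      also have "\<dots> \<le> L^2 * e^2 * (f x)^2"
      proof -
        have "(x - x0)^2 \<le> e^2" using Jd[OF xJ] by (simp add: abs_le_square_iff[symmetric])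
        then show ?thesis by (intro mult_right_mono mult_left_mono) auto
      qed
      finally have "c^2 \<le> (L^2 * e^2) * (f x)^2" by simp
      then show "?K \<le> (f x)^2" using L e0 by (simp add: divide_le_eq mult.commute)
    qed
  qed
  have "(LINT x:?J|lebesgue. ?K) \<le> (LINT x:?J|lebesgue. (f x)^2)"
    by (rule set_integral_mono_AE[OF cont_si[OF continuous_on_const] fJ aeJ])
  moreover have "(LINT x:?J|lebesgue. ?K) = e * ?K" using e0 by (simp add: lint_const)
  moreover have "(LINT x:?J|lebesgue. (f x)^2) \<le> F"
    unfolding F_def set_lebesgue_integral_def
  proof (rule integral_mono)
    show "integrable lebesgue (\<lambda>x. indicat_real ?J x *\<^sub>R (f x)\<^sup>2)" using fJ unfolding set_integrable_def .
    show "integrable lebesgue (\<lambda>x. indicat_real ?I x *\<^sub>R (f x)\<^sup>2)" using fi unfolding set_integrable_def .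
    show "indicat_real ?J x *\<^sub>R (f x)\<^sup>2 \<le> indicat_real ?I x *\<^sub>R (f x)\<^sup>2" for x
      using J by (auto simp: indicator_def)
  qed
  ultimately have "e * ?K \<le> F" by linarith
  then have "c^2 \<le> L^2 * e * F" using L e0 by (simp add: power2_eq_square field_simps)
  also have "\<dots> \<le> L^2 * (c^2 / (2 * L^2 * (F + 1))) * F"
    using ec F0 L by (intro mult_right_mono mult_left_mono) auto
  also have "\<dots> = c^2 * (F / (2 * (F + 1)))"
  proof -
    have "L^2 * (c^2 / (2 * L^2 * (F + 1))) = (L^2 * c^2) / (L^2 * (2 * (F + 1)))" by (simp add: mult_ac)
    also have "\<dots> = c^2 / (2 * (F + 1))" by (rule nonzero_mult_divide_mult_cancel_left) (use L in simp)
    finally show ?thesis by simp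
  qed
  also have "\<dots> < c^2 * 1"
    using c2 F0 by (intro mult_strict_left_mono) auto
  finally show False by simp
qed


theorem theorem2:
  fixes \<mu> :: real and P :: "int \<Rightarrow> real" and q w f u :: "real \<Rightarrow> real"
  assumes mu_pos: "\<mu> > 0"
    and P_choice: "P = P_rB \<mu> \<or> P = P_rBW \<mu>"
    and q_periodic: "\<forall>x. q (x + 2*pi) = q x"
    and q_H2: "H2_per q"
    and w_is_Pqx: "is_multiplier_image (\<lambda>k. complex_of_real (P k) * (\<i> * of_int k)) q w"
    and w_nonvanishing: "{x \<in> {0..2*pi}. w x = 0} \<in> null_sets lebesgue"
    and f_L2: "L2_per f"
    and u_def: "is_multiplier_image (\<lambda>k. complex_of_real (- ((real_of_int k)^2 * (P k)^2)))
                  (\<lambda>x. w x * f x) u"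
    and eigen: "AE x in lebesgue. x \<in> {0..2*pi} \<longrightarrow> w x * u x = 0"
  shows "AE x in lebesgue. x \<in> {0..2*pi} \<longrightarrow> f x = 0"
proof -
  let ?I = "{0..2*pi}"
  have wL2: "L2_per w" and hw: "\<And>k. fcoeff w k = complex_of_real (P k) * (\<i> * of_int k) * fcoeff q k"
    using w_is_Pqx unfolding is_multiplier_image_def by auto
  have hu: "\<And>k. fcoeff u k = complex_of_real (- ((real_of_int k)^2 * (P k)^2)) * fcoeff (\<lambda>x. w x * f x) k"
    using u_def unfolding is_multiplier_image_def by auto
  have wnz: "AE x in lebesgue. x \<in> ?I \<longrightarrow> w x \<noteq> 0"
    using AE_not_in[OF w_nonvanishing] by eventually_elim auto
  have u0: "AE x in lebesgue. x \<in> ?I \<longrightarrow> u x = 0"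
    using wnz eigen by eventually_elim auto
  have fu0: "fcoeff u k = 0" for k
  proof -
    have "(LINT x:?I|lebesgue. complex_of_real (u x) * cis (- (real_of_int k * x))) = 0"
      unfolding set_lebesgue_integral_def
      by (rule integral_eq_zero_AE) (use u0 in \<open>eventually_elim, auto simp: indicator_def\<close>)
    then show ?thesis unfolding fcoeff_def by simp
  qed
  define h where "h x = w x * f x" for x
  have hi: "set_integrable lebesgue ?I h" unfolding h_def by (rule L2_prod[OF wL2 f_L2])
  have fh0: "fcoeff h k = 0" if "k \<noteq> 0" for k
  proof -
    have "P k > 0" by (rule P_bound(1)[OF mu_pos P_choice that])
    then have "complex_of_real (- ((real_of_int k)^2 * (P k)^2)) \<noteq> 0" using that by simp
    then show ?thesis using hu[of k] fu0[of k] unfolding h_def by simp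
  qed
  have lint_fc: "(LINT x:?I|lebesgue. complex_of_real (g x) * cis (- (real_of_int k * x))) = 2*pi * fcoeff g k" for g k
    unfolding fcoeff_def by simp
  have cisI: "(LINT x:?I|lebesgue. cis (- (real_of_int k * x))) = (if k = 0 then 2*pi else 0)" for k
    using cis_int[of "-k"] by simp
  define c where "c = (LINT x:?I|lebesgue. h x) / (2*pi)"
  have hc: "AE x in lebesgue. x \<in> ?I \<longrightarrow> h x - c = 0"
  proof (rule U1)
    show "set_integrable lebesgue ?I (\<lambda>x. h x - c)"
      by (rule set_integral_diff(1)[OF hi cont_si[OF continuous_on_const]])
    fix k :: int
    have i1: "set_integrable lebesgue ?I (\<lambda>x. complex_of_real (h x) * cis (- (real_of_int k * x)))"
      by (rule int_cont_cplx[OF hi]) (intro continuous_intros)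
    have i2: "set_integrable lebesgue ?I (\<lambda>x. complex_of_real c * cis (- (real_of_int k * x)))"
      by (intro cont_si continuous_intros)
    have "(LINT x:?I|lebesgue. complex_of_real (h x - c) * cis (- (real_of_int k * x)))
        = (LINT x:?I|lebesgue. complex_of_real (h x) * cis (- (real_of_int k * x)) - complex_of_real c * cis (- (real_of_int k * x)))"
      by (simp add: algebra_simps)
    also have "\<dots> = 2*pi * fcoeff h k - complex_of_real c * (if k = 0 then 2*pi else 0)"
      by (simp only: set_integral_diff(2)[OF i1 i2] set_integral_mult_right lint_fc cisI)
    also have "\<dots> = 0"
    proof (cases "k = 0")
      case True
      have "2*pi * fcoeff h 0 = complex_of_real (LINT x:?I|lebesgue. h x)"
        using lint_fc[of h 0] by (simp add: set_integral_complex_of_real)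
      then show ?thesis using True by (simp add: c_def)
    next
      case False then show ?thesis using fh0 by simp
    qed
    finally show "(LINT x:?I|lebesgue. complex_of_real (h x - c) * cis (- (real_of_int k * x))) = 0" .
  qed
  have hcw: "AE x in lebesgue. x \<in> ?I \<longrightarrow> w x * f x = c"
    using hc unfolding h_def by eventually_elim auto
  define a where "a n = fcoeff w (int (Suc n))" for n
  have H2: "(\<lambda>k::int. (real_of_int k)^4 * (cmod (fcoeff q k))^2) summable_on UNIV"
    using q_H2 unfolding H2_per_def by auto
  have sa: "summable (\<lambda>n. real (Suc n) * cmod (a n))"
    unfolding a_def by (rule a_summable[OF mu_pos P_choice H2 hw])
  define W where "W = ser a"
  have Wc: "continuous_on ?I W" unfolding W_def by (rule ser_cont[OF sa])
  have Wi: "set_integrable lebesgue ?I W" by (rule cont_si[OF Wc])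
  have Wcoef: "(LINT x:?I|lebesgue. complex_of_real (W x) * cis (- (real_of_int k * x))) = 2*pi * fcoeff w k" for k
  proof -
    have "(if k > 0 then a (nat k - 1) else if k < 0 then cnj (a (nat (-k) - 1)) else 0) = fcoeff w k"
    proof -
      consider "k > 0" | "k < 0" | "k = 0" by linarith
      then show ?thesis
      proof cases
        case 1
        then have "int (Suc (nat k - 1)) = k" by simp
        then show ?thesis using 1 unfolding a_def by simp
      next
        case 2
        then have "int (Suc (nat (-k) - 1)) = -k" by simp
        then have "cnj (a (nat (-k) - 1)) = cnj (fcoeff w (-k))" unfolding a_def by simp
        also have "\<dots> = fcoeff w k" using fcoeff_conj[of w "-k"] by simp
        finally show ?thesis using 2 by simp
      next
        case 3
        then show ?thesis using hw[of 0] by simp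
      qed
    qed
    then show ?thesis unfolding W_def using ser_coeff[OF sa, of k] by simp
  qed
  have wW: "AE x in lebesgue. x \<in> ?I \<longrightarrow> W x - w x = 0"
  proof (rule U1)
    show "set_integrable lebesgue ?I (\<lambda>x. W x - w x)"
      by (rule set_integral_diff(1)[OF Wi L2_int[OF wL2]])
    fix k :: int
    have i1: "set_integrable lebesgue ?I (\<lambda>x. complex_of_real (W x) * cis (- (real_of_int k * x)))"
      by (rule int_cont_cplx[OF Wi]) (intro continuous_intros)
    have i2: "set_integrable lebesgue ?I (\<lambda>x. complex_of_real (w x) * cis (- (real_of_int k * x)))"
      by (rule int_cont_cplx[OF L2_int[OF wL2]]) (intro continuous_intros)
    have "(LINT x:?I|lebesgue. complex_of_real (W x - w x) * cis (- (real_of_int k * x)))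
        = (LINT x:?I|lebesgue. complex_of_real (W x) * cis (- (real_of_int k * x)) - complex_of_real (w x) * cis (- (real_of_int k * x)))"
      by (simp add: algebra_simps)
    also have "\<dots> = 0"
      by (simp only: set_integral_diff(2)[OF i1 i2] Wcoef lint_fc) simp
    finally show "(LINT x:?I|lebesgue. complex_of_real (W x - w x) * cis (- (real_of_int k * x))) = 0" .
  qed
  have Wint0: "(LINT x:?I|lebesgue. W x) = 0"
  proof -
    have "complex_of_real (LINT x:?I|lebesgue. W x) = 2*pi * fcoeff w 0"
      using Wcoef[of 0] by (simp add: set_integral_complex_of_real)
    then show ?thesis using hw[of 0] by simp
  qed
  obtain x0 where x0: "x0 \<in> ?I" "W x0 = 0" using zero_exists[OF Wc Wint0] by blast
  define L where "L = (\<Sum>n. 2 * (real (Suc n) * cmod (a n))) + 1"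
  have L0: "(\<Sum>n. 2 * (real (Suc n) * cmod (a n))) \<ge> 0" by (intro suminf_nonneg summable_mult sa) auto
  then have Lpos: "L > 0" unfolding L_def by simp
  have Wb: "\<bar>W x\<bar> \<le> L * \<bar>x - x0\<bar>" for x
  proof -
    have "\<bar>W x - W x0\<bar> \<le> (\<Sum>n. 2 * (real (Suc n) * cmod (a n))) * \<bar>x - x0\<bar>"
      unfolding W_def by (rule ser_lip[OF sa])
    also have "\<dots> \<le> L * \<bar>x - x0\<bar>" unfolding L_def by (intro mult_right_mono) auto
    finally show ?thesis using x0 by simp
  qed
  have fi: "set_integrable lebesgue ?I (\<lambda>x. (f x)^2)" using f_L2 unfolding L2_per_def by auto
  have "c = 0"
  proof (rule final_contra[OF Lpos x0(1) fi])
    show "AE x in lebesgue. x \<in> ?I \<longrightarrow> c^2 \<le> L^2 * (x - x0)^2 * (f x)^2"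
      using hcw wW
    proof eventually_elim
      case (elim x)
      show ?case
      proof
        assume xI: "x \<in> ?I"
        then have "c = W x * f x" using elim by auto
        then have "c^2 = (W x)^2 * (f x)^2" by (simp add: power_mult_distrib)
        also have "\<dots> \<le> (L * \<bar>x - x0\<bar>)^2 * (f x)^2"
        proof (rule mult_right_mono)
          have "\<bar>W x\<bar>^2 \<le> (L * \<bar>x - x0\<bar>)^2" by (rule power_mono[OF Wb]) simp
          then show "(W x)^2 \<le> (L * \<bar>x - x0\<bar>)^2" by simp
        qed simp
        also have "\<dots> = L^2 * (x - x0)^2 * (f x)^2" by (simp add: power_mult_distrib)
        finally show "c^2 \<le> L^2 * (x - x0)^2 * (f x)^2" .
      qed
    qed
  qed
  from hcw wnz show ?thesis
  proof eventually_elim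
    case (elim x)
    show ?case
    proof
      assume "x \<in> ?I"
      then have "w x * f x = 0" "w x \<noteq> 0" using elim \<open>c = 0\<close> by auto
      then show "f x = 0" by simp
    qed
  qed
qed


end
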